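(* Let $\ell\ge2$, $r_0,\dots,r_\ell\ge1$ integers, $d_0,\dots,d_\ell$ integers with $d_V=\sum_kd_k=0$, and $\mathbf{g}\ge1$ an integer. For every real $c>\max_k\mu_k$ there is a real number $\Phi(c)>0$ with $\mathring{\mathfrak{F}}(c)=(\mu_0-\mu_1)\Phi(c)$, where $\mathring{\mathfrak{F}}(c)$ is defined in the context. In particular, if $\mathring{\mathfrak{F}}(c)>0$ then $\mu_0>\mu_1$.
   Context: $\mu_k=d_k/r_k$, $r_V=\sum_kr_k$, $\pi_R=\prod_k(r_k-1)!$. For $1\le j\ne k\le\ell$: $\alpha_0=\frac{\pi_R}{r_V!}(cr_V-d_V)$, $\alpha_j=\frac{\pi_R}{(r_V+1)!}r_j(c(r_V+1)-d_V-\mu_j)$, $\alpha_{jk}=\frac{\pi_R}{(r_V+2)!}r_jr_k(c(r_V+2)-d_V-\mu_j-\mu_k)$, $\alpha_{jj}=\frac{\pi_R}{(r_V+2)!}r_j(r_j+1)(c(r_V+2)-d_V-2\mu_j)$, $\beta_0=\frac{\pi_R}{(r_V-1)!}((r_V-1)r_Vc+2(1-\mathbf{g})-(r_V-1)d_V)$, $\beta_j=\frac{\pi_Rr_j}{r_V!}(r_V(r_V-1)c+2(1-\mathbf{g})-d_V(r_V-2)-r_V\mu_j)$. $A_{ij}=\alpha_{ij}-\alpha_i\alpha_j/\alpha_0$ for $2\le i,j\le\ell$ (invertible for $c>\max\mu_k$), and $\mathring{\mathfrak{F}}(c)=(\alpha_0\beta_1-\alpha_1\beta_0)-\sum_{j,r=2}^\ell(A^{-1})_{rj}(\alpha_0\beta_r-\alpha_r\beta_0)\big(\alpha_{j1}-\frac{\alpha_1\alpha_j}{\alpha_0}\big)$.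 (When $V_0=U_0/L$, $V_1=L$ arise from the test configuration of a subbundle $L$ of an indecomposable summand $U_0$ of $E$ over a curve of genus $\ge1$, normalized so that $\deg E=0$, $\mathring{\mathfrak{F}}(c)$ at $c=m$ is a positive multiple of the relative Donaldson–Futaki invariant for the polarization $\mathcal{O}(1)_{\mathbb{P}(E)}\otimes\mathcal{O}(m)_C$.) *)

theory Defs
  imports Complex_Main "Jordan_Normal_Form.Gauss_Jordan_Elimination"
begin

definition mu :: "(nat \<Rightarrow> int) \<Rightarrow> (nat \<Rightarrow> int) \<Rightarrow> nat \<Rightarrow> real" where
  "mu r d k = real_of_int (d k) / real_of_int (r k)"

definition rV :: "nat \<Rightarrow> (nat \<Rightarrow> int) \<Rightarrow> int" where
  "rV l r = (\<Sum>k\<le>l. r k)"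

definition dV :: "nat \<Rightarrow> (nat \<Rightarrow> int) \<Rightarrow> int" where
  "dV l d = (\<Sum>k\<le>l. d k)"

definition piR :: "nat \<Rightarrow> (nat \<Rightarrow> int) \<Rightarrow> real" where
  "piR l r = (\<Prod>k\<le>l. fact (nat (r k - 1)))"

definition alpha0 :: "nat \<Rightarrow> (nat \<Rightarrow> int) \<Rightarrow> (nat \<Rightarrow> int) \<Rightarrow> real \<Rightarrow> real" where
  "alpha0 l r d c = piR l r / fact (nat (rV l r)) * (c * real_of_int (rV l r) - real_of_int (dV l d))"

definition alpha1 :: "nat \<Rightarrow> (nat \<Rightarrow> int) \<Rightarrow> (nat \<Rightarrow> int) \<Rightarrow> real \<Rightarrow> nat \<Rightarrow> real" where
  "alpha1 l r d c j = piR l r / fact (nat (rV l r + 1)) * real_of_int (r j)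
     * (c * (real_of_int (rV l r) + 1) - real_of_int (dV l d) - mu r d j)"

definition alpha2 :: "nat \<Rightarrow> (nat \<Rightarrow> int) \<Rightarrow> (nat \<Rightarrow> int) \<Rightarrow> real \<Rightarrow> nat \<Rightarrow> nat \<Rightarrow> real" where
  "alpha2 l r d c j k = (if j = k then
       piR l r / fact (nat (rV l r + 2)) * real_of_int (r j) * (real_of_int (r j) + 1)
         * (c * (real_of_int (rV l r) + 2) - real_of_int (dV l d) - 2 * mu r d j)
     else
       piR l r / fact (nat (rV l r + 2)) * real_of_int (r j) * real_of_int (r k)
         * (c * (real_of_int (rV l r) + 2) - real_of_int (dV l d) - mu r d j - mu r d k))"

definition beta0 :: "nat \<Rightarrow> (nat \<Rightarrow> int) \<Rightarrow> (nat \<Rightarrow> int) \<Rightarrow> int \<Rightarrow> real \<Rightarrow> real" where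
  "beta0 l r d g c = piR l r / fact (nat (rV l r - 1))
     * ((real_of_int (rV l r) - 1) * real_of_int (rV l r) * c + 2 * (1 - real_of_int g)
        - (real_of_int (rV l r) - 1) * real_of_int (dV l d))"

definition beta1 :: "nat \<Rightarrow> (nat \<Rightarrow> int) \<Rightarrow> (nat \<Rightarrow> int) \<Rightarrow> int \<Rightarrow> real \<Rightarrow> nat \<Rightarrow> real" where
  "beta1 l r d g c j = piR l r * real_of_int (r j) / fact (nat (rV l r))
     * (real_of_int (rV l r) * (real_of_int (rV l r) - 1) * c + 2 * (1 - real_of_int g)
        - real_of_int (dV l d) * (real_of_int (rV l r) - 2) - real_of_int (rV l r) * mu r d j)"

text \<open>The matrix A_{ij} (2 \<le> i,j \<le> \<ell>), stored with indices shifted by 2,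
  as an (\<ell>-1)\<times>(\<ell>-1) matrix.\<close>
definition Amat :: "nat \<Rightarrow> (nat \<Rightarrow> int) \<Rightarrow> (nat \<Rightarrow> int) \<Rightarrow> real \<Rightarrow> real mat" where
  "Amat l r d c = mat (l - 1) (l - 1) (\<lambda>(i, j).
      alpha2 l r d c (i + 2) (j + 2)
      - alpha1 l r d c (i + 2) * alpha1 l r d c (j + 2) / alpha0 l r d c)"

definition Ainv :: "nat \<Rightarrow> (nat \<Rightarrow> int) \<Rightarrow> (nat \<Rightarrow> int) \<Rightarrow> real \<Rightarrow> real mat" where
  "Ainv l r d c = the (mat_inverse (Amat l r d c))"

definition Fring :: "nat \<Rightarrow> (nat \<Rightarrow> int) \<Rightarrow> (nat \<Rightarrow> int) \<Rightarrow> int \<Rightarrow> real \<Rightarrow> real" where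
  "Fring l r d g c =
     (alpha0 l r d c * beta1 l r d g c 1 - alpha1 l r d c 1 * beta0 l r d g c)
     - (\<Sum>j\<in>{2..l}. \<Sum>s\<in>{2..l}.
          Ainv l r d c $$ (s - 2, j - 2)
          * (alpha0 l r d c * beta1 l r d g c s - alpha1 l r d c s * beta0 l r d g c)
          * (alpha2 l r d c j 1 - alpha1 l r d c 1 * alpha1 l r d c j / alpha0 l r d c))"

end

theory Submission
  imports Defs "Jordan_Normal_Form.Determinant"
begin

lemma lagrange_id:
  fixes a z :: "nat \<Rightarrow> real"
  shows "(\<Sum>i\<in>I. \<Sum>j\<in>I. a i * a j * (z i - z j)^2)
     = 2 * ((\<Sum>i\<in>I. a i) * (\<Sum>i\<in>I. a i * (z i)^2) - (\<Sum>i\<in>I. a i * z i)^2)"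
proof -
  have "(\<Sum>i\<in>I. \<Sum>j\<in>I. a i * a j * (z i - z j)^2)
    = (\<Sum>i\<in>I. \<Sum>j\<in>I. (a i * (z i)^2) * a j + a i * (a j * (z j)^2) - 2 * ((a i * z i) * (a j * z j)))"
    by (intro sum.cong refl) (simp add: power2_eq_square algebra_simps)
  also have "\<dots> = (\<Sum>i\<in>I. \<Sum>j\<in>I. (a i * (z i)^2) * a j) + (\<Sum>i\<in>I. \<Sum>j\<in>I. a i * (a j * (z j)^2))
      - (\<Sum>i\<in>I. \<Sum>j\<in>I. 2 * ((a i * z i) * (a j * z j)))"
    by (simp add: sum_subtractf sum.distrib)
  also have "(\<Sum>i\<in>I. \<Sum>j\<in>I. (a i * (z i)^2) * a j) = (\<Sum>i\<in>I. a i * (z i)^2) * (\<Sum>j\<in>I. a j)"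
    by (simp only: sum_product)
  also have "(\<Sum>i\<in>I. \<Sum>j\<in>I. a i * (a j * (z j)^2)) = (\<Sum>i\<in>I. a i) * (\<Sum>j\<in>I. a j * (z j)^2)"
    by (simp only: sum_product)
  also have "(\<Sum>i\<in>I. \<Sum>j\<in>I. 2 * ((a i * z i) * (a j * z j))) = 2 * ((\<Sum>i\<in>I. a i * z i) * (\<Sum>j\<in>I. a j * z j))"
    unfolding sum_product by (simp add: sum_distrib_left)
  finally show ?thesis by (simp add: power2_eq_square algebra_simps)
qed

lemma split_sum2:
  fixes f :: "nat \<Rightarrow> 'a::comm_monoid_add"
  assumes "l \<ge> 2"
  shows "(\<Sum>k\<le>l. f k) = f 0 + f 1 + (\<Sum>k<l-1. f (k+2))"
proof -
  obtain m where l: "l = Suc (Suc m)" using assms by (metis add_2_eq_Suc le_Suc_ex)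
  have "(\<Sum>k\<le>l. f k) = f 0 + (f 1 + (\<Sum>k\<le>m. f (Suc (Suc k))))"
    unfolding l sum.atMost_Suc_shift by simp
  moreover have "{..<l-1} = {..m}" using l by auto
  ultimately show ?thesis by (simp add: add.assoc)
qed

lemma shift_sum2:
  fixes f :: "nat \<Rightarrow> 'a::comm_monoid_add"
  assumes "l \<ge> 2"
  shows "(\<Sum>j\<in>{2..l}. f j) = (\<Sum>k<l-1. f (k+2))"
proof -
  have "(\<Sum>j\<in>{0+2..(l-2)+2}. f j) = (\<Sum>k\<in>{0..l-2}. f (k+2))"
    by (rule sum.shift_bounds_cl_nat_ivl)
  moreover have "{0+2..(l-2)+2} = {2..l}" using assms by auto
  moreover have "{0..l-2} = {..<l-1}" using assms by auto
  ultimately show ?thesis by metis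
qed

lemma t1:
  fixes P f R c ri rj mi mj A B :: real
  assumes "P \<noteq> 0" "f \<noteq> 0" "A \<noteq> 0" "B \<noteq> 0" "c \<noteq> 0" "R \<noteq> 0" and AB: "A = R + 1" "B = R + 2"
  shows "P / (B*A*f) * (ri * rj * (c * B - mi - mj))
   - P / (A * f) * ri * (c * A - mi) * (P / (A * f) * rj * (c * A - mj)) / (P / f * (c * R))
   = P / (B*A*f) * (0 - (ri * rj * (c * R) + ri * (rj * (c - mj)) + (ri * (c - mi)) * rj + B / (c * R) * (ri * (c - mi)) * (rj * (c - mj))) / A)"
proof -
  have e2: "(ri * rj * (c * B - mi - mj)) - B / (A * (c * R)) * (ri * rj * (c * A - mi) * (c * A - mj))
     = (0 - (ri * rj * (c * R) + ri * (rj * (c - mj)) + (ri * (c - mi)) * rj + B / (c * R) * (ri * (c - mi)) * (rj * (c - mj))) / A)"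
    using assms(1-6) apply (simp add: field_simps) unfolding AB by (simp add: algebra_simps)
  have e1: "P / (A * f) * ri * (c * A - mi) * (P / (A * f) * rj * (c * A - mj)) / (P / f * (c * R))
    = P / (B*A*f) * (B / (A * (c * R)) * (ri * rj * (c * A - mi) * (c * A - mj)))"
    using assms(1-6) by (simp add: field_simps)
  show ?thesis unfolding e1 using e2 by (metis right_diff_distrib)
qed

lemma t2:
  fixes P f R c ri mi A B :: real
  assumes "P \<noteq> 0" "f \<noteq> 0" "A \<noteq> 0" "B \<noteq> 0" "c \<noteq> 0" "R \<noteq> 0" and AB: "A = R + 1" "B = R + 2"
  shows "P / (B*A*f) * (ri * (ri + 1) * (c * B - 2 * mi))
   - P / (A * f) * ri * (c * A - mi) * (P / (A * f) * ri * (c * A - mi)) / (P / f * (c * R))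
   = P / (B*A*f) * (ri * (c * R + 2 * (c - mi)) - (ri * ri * (c * R) + ri * (ri * (c - mi)) + (ri * (c - mi)) * ri + B / (c * R) * (ri * (c - mi)) * (ri * (c - mi))) / A)"
proof -
  have h: "ri * (ri + 1) * (c * B - 2 * mi) = ri * ri * (c * B - mi - mi) + ri * (c * R + 2 * (c - mi))"
    unfolding AB by (simp add: algebra_simps)
  show ?thesis using t1[OF assms, of ri ri mi mi] unfolding h by (simp add: algebra_simps)
qed

lemma t3:
  fixes P f R c rj mj A G :: real
  assumes "P \<noteq> 0" "f \<noteq> 0" "A \<noteq> 0" "R \<noteq> 0" and AB: "A = R + 1"
  shows "P / f * (c * R) * (P * rj / f * (R * (R - 1) * c + G - R * mj))
     - P / (A * f) * rj * (c * A - mj) * (P / (f / R) * ((R - 1) * R * c + G))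
     = P^2 * R * (G - 2 * R * c) / (f * f * A) * rj * mj"
  using assms(1-4) apply (simp add: field_simps power2_eq_square) unfolding AB by (simp add: algebra_simps)

lemma t4:
  fixes c R A S T S2 T2 :: real
  assumes "c \<noteq> 0" "R \<noteq> 0" "A \<noteq> 0" "A = R + 1"
  shows "c * R * S2 + 2 * T2 - (S * (c * R * S + T) + T * (S + (R + 2) / (c * R) * T)) / A
    = c * (R * S2 - S^2) + 2 / (c * R) * (c * R * T2 - T^2) + (c * S - T)^2 / (c * A)"
  using assms(1-3) apply (simp add: field_simps power2_eq_square) unfolding assms(4) by (simp add: algebra_simps)
lemma t5:
  fixes c R A a b ri xi :: real
  assumes "c \<noteq> 0" "R \<noteq> 0" "A \<noteq> 0" "A = R + 1" "c * R * a + 2 * b = R"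
  shows "ri - (ri * (c * R * a + b) + ri * xi * (a + (R + 2) / (c * R) * b)) / A
     = (a + (R + 2) / (c * R) * b) / A * ri * (c - xi)"
proof -
  have ae: "a = (R - 2 * b) / (c * R)" using assms(1,2,5) by (simp add: field_simps)
  show ?thesis unfolding ae using assms(1-3) apply (simp add: field_simps) unfolding assms(4) by (simp add: algebra_simps)
qed

locale P319 =
  fixes l :: nat and r d :: "nat \<Rightarrow> int" and g :: int and c :: real
  assumes l2: "l \<ge> 2" and rpos: "\<And>k. k \<le> l \<Longrightarrow> r k \<ge> 1"
    and dsum: "(\<Sum>k\<le>l. d k) = 0" and g1: "g \<ge> 1"
    and muc: "\<And>k. k \<le> l \<Longrightarrow> mu r d k < c"
begin

definition "R = real_of_int (rV l r)"
definition "N = nat (rV l r)"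
definition "rr k = real_of_int (r k)"
definition "x k = c - mu r d k"
definition "y k = c * R + 2 * x k"
definition "kap = (R + 2) / (c * R)"
definition "P = piR l r"
definition "fN = (fact N :: real)"
definition "Q = P / fact (N + 2)"
definition "Mf i j = (if i = j then rr i * y i else 0)
   - (rr i * rr j * (c * R) + rr i * (rr j * x j) + (rr i * x i) * rr j + kap * (rr i * x i) * (rr j * x j)) / (R + 1)"
definition "Af i j = alpha2 l r d c i j - alpha1 l r d c i * alpha1 l r d c j / alpha0 l r d c"
definition "bb j = alpha0 l r d c * beta1 l r d g c j - alpha1 l r d c j * beta0 l r d g c"

lemma rr_pos: "k \<le> l \<Longrightarrow> rr k \<ge> 1"
  using rpos unfolding rr_def by simp

lemma rr_gt0: "k \<le> l \<Longrightarrow> rr k > 0" using rr_pos[of k] by simp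

lemma rr_ge0: "k \<le> l \<Longrightarrow> rr k \<ge> 0" using rr_pos[of k] by simp

lemma dV0: "dV l d = 0" using dsum unfolding dV_def by simp

lemma R_sum: "R = (\<Sum>k\<le>l. rr k)"
  unfolding R_def rV_def rr_def by simp

lemma sum_rmu: "(\<Sum>k\<le>l. rr k * mu r d k) = 0"
proof -
  have "(\<Sum>k\<le>l. rr k * mu r d k) = (\<Sum>k\<le>l. real_of_int (d k))"
  proof (intro sum.cong refl)
    fix k assume "k \<in> {..l}"
    then have "r k \<noteq> 0" using rpos by force
    then show "rr k * mu r d k = real_of_int (d k)" by (simp add: mu_def rr_def)
  qed
  also have "\<dots> = 0" using dsum by (metis of_int_0 of_int_sum)
  finally show ?thesis .
qed

lemma R_ge: "R \<ge> 3"
proof -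
  have "(\<Sum>k\<le>l. (1::real)) \<le> (\<Sum>k\<le>l. rr k)" by (intro sum_mono rr_pos) auto
  then show ?thesis using l2 R_sum by simp
qed

lemma c_pos: "c > 0"
proof -
  have "(\<Sum>k\<le>l. rr k * mu r d k) < (\<Sum>k\<le>l. rr k * c)"
  proof (intro sum_strict_mono)
    fix k assume "k \<in> {..l}"
    then have "rr k > 0" "mu r d k < c" using rr_pos muc by force+
    then show "rr k * mu r d k < rr k * c" by simp
  qed auto
  then have "0 < c * R" using sum_rmu R_sum by (simp add: sum_distrib_left sum_distrib_right mult.commute)
  then show ?thesis using R_ge by (simp add: zero_less_mult_iff)
qed

lemma sum_rx: "(\<Sum>k\<le>l. rr k * x k) = c * R"
proof -
  have "(\<Sum>k\<le>l. rr k * x k) = (\<Sum>k\<le>l. rr k * c) - (\<Sum>k\<le>l. rr k * mu r d k)"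
    unfolding x_def by (simp add: sum_subtractf algebra_simps)
  then show ?thesis using sum_rmu R_sum by (simp add: sum_distrib_left sum_distrib_right mult.commute)
qed

lemma x_pos: "k \<le> l \<Longrightarrow> x k > 0" using muc unfolding x_def by auto
lemma y_pos: "k \<le> l \<Longrightarrow> y k > 0" using x_pos c_pos R_ge unfolding y_def
  by (smt (verit) mult_pos_pos)

lemma rV_nn: "rV l r \<ge> 0" using R_ge unfolding R_def by simp
lemma N_R: "real N = R" using rV_nn unfolding N_def R_def by simp
lemma fN_pos: "fN > 0" unfolding fN_def by simp
lemma P_pos: "P > 0" unfolding P_def piR_def by (intro prod_pos) simp
lemma fact1: "fact (nat (rV l r + 1)) = (R + 1) * fN"
proof -
  have "nat (rV l r + 1) = Suc N" using rV_nn unfolding N_def by simp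
  then show ?thesis unfolding fN_def using N_R by (simp add: algebra_simps)
qed
lemma fact2: "fact (nat (rV l r + 2)) = (R + 2) * (R + 1) * fN"
proof -
  have "nat (rV l r + 2) = Suc (Suc N)" using rV_nn unfolding N_def by simp
  then show ?thesis unfolding fN_def using N_R by (simp add: algebra_simps)
qed
lemma factm1: "fact (nat (rV l r - 1)) = fN / R"
proof -
  have N1: "N = Suc (N - 1)" using R_ge N_R by (cases N) auto
  have "nat (rV l r - 1) = N - 1" unfolding N_def by simp
  moreover have "fN = R * fact (N - 1)" unfolding fN_def
    by (subst N1, subst fact_Suc, subst N1[symmetric]) (use N_R N1 in \<open>simp del: of_nat_Suc\<close>)
  ultimately show ?thesis using R_ge by simp
qed
lemma Q_eq: "Q = P / ((R + 2) * (R + 1) * fN)"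
proof -
  have "fact (N + 2) = (fact (nat (rV l r + 2)) :: real)" using rV_nn unfolding N_def
    by (simp add: nat_add_distrib)
  then show ?thesis unfolding Q_def fact2 by simp
qed

lemma alpha0_eq: "alpha0 l r d c = P / fN * (c * R)"
  unfolding alpha0_def dV0 P_def fN_def N_def R_def by simp
lemma alpha1_eq: "alpha1 l r d c j = P / ((R + 1) * fN) * rr j * (c * (R + 1) - mu r d j)"
  unfolding alpha1_def dV0 fact1 by (simp add: P_def R_def rr_def)
lemma alpha2_eq: "alpha2 l r d c i j = Q * (if i = j then rr i * (rr i + 1) * (c * (R + 2) - 2 * mu r d i)
   else rr i * rr j * (c * (R + 2) - mu r d i - mu r d j))"
  unfolding alpha2_def dV0 fact2 Q_eq by (simp add: P_def R_def rr_def)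
lemma beta0_eq: "beta0 l r d g c = P / (fN / R) * ((R - 1) * R * c + 2 * (1 - real_of_int g))"
  unfolding beta0_def dV0 factm1 by (simp add: P_def R_def)
lemma beta1_eq: "beta1 l r d g c j = P * rr j / fN * (R * (R - 1) * c + 2 * (1 - real_of_int g) - R * mu r d j)"
  unfolding beta1_def dV0 by (simp add: P_def R_def rr_def fN_def N_def)

lemma Af_eq: "Af i j = Q * Mf i j"
proof -
  define A where "A = R + 1"
  define B where "B = R + 2"
  have ne: "fN \<noteq> 0" "P \<noteq> 0" "A \<noteq> 0" "B \<noteq> 0" "c \<noteq> 0" "R \<noteq> 0"
    using fN_pos P_pos R_ge c_pos unfolding A_def B_def by auto
  have a0: "alpha0 l r d c = P / fN * (c * R)" by (rule alpha0_eq)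
  have a1: "\<And>j. alpha1 l r d c j = P / (A * fN) * rr j * (c * A - mu r d j)"
    unfolding alpha1_eq A_def by simp
  have a2: "\<And>i j. alpha2 l r d c i j = P / (B * A * fN) * (if i = j then rr i * (rr i + 1) * (c * B - 2 * mu r d i)
   else rr i * rr j * (c * B - mu r d i - mu r d j))"
    unfolding alpha2_eq Q_eq A_def B_def by simp
  have q: "Q = P / (B * A * fN)" unfolding Q_eq A_def B_def by simp
  have m: "Mf i j = (if i = j then rr i * (c * R + 2 * (c - mu r d i)) else 0)
   - (rr i * rr j * (c * R) + rr i * (rr j * (c - mu r d j)) + (rr i * (c - mu r d i)) * rr j
      + B / (c * R) * (rr i * (c - mu r d i)) * (rr j * (c - mu r d j))) / A"
    unfolding Mf_def y_def x_def kap_def A_def B_def by simp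
  show ?thesis
  proof (cases "i = j")
    case True
    show ?thesis unfolding Af_def a0 a1 a2 q m unfolding True
      by (simp only: simp_thms(6) if_True) (rule t2[OF ne(2) ne(1) ne(3-6) A_def B_def])
  next
    case False
    show ?thesis unfolding Af_def a0 a1 a2 q m
      by (simp only: False if_False) (rule t1[OF ne(2) ne(1) ne(3-6) A_def B_def])
  qed
qed

lemma Mf_sym: "Mf i j = Mf j i" unfolding Mf_def by (simp add: algebra_simps)

definition "Kc = P^2 * R * (2 * (1 - real_of_int g) - 2 * R * c) / (fN * fN * (R + 1))"

lemma bb_eq: "bb j = Kc * rr j * mu r d j"
proof -
  have ne: "fN \<noteq> 0" "P \<noteq> 0" "R + 1 \<noteq> 0" "R \<noteq> 0"
    using fN_pos P_pos R_ge by auto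
  show ?thesis unfolding bb_def alpha0_eq alpha1_eq beta0_eq beta1_eq Kc_def
    using t3[OF ne(2,1,3,4) refl, of c "rr j" "2 * (1 - real_of_int g)" "mu r d j"] by simp
qed

lemma Kc_neg: "Kc < 0"
proof -
  have "2 * (1 - real_of_int g) - 2 * R * c < 0" using g1 c_pos R_ge
    by (smt (verit) mult_pos_pos of_int_1_le_iff)
  then show ?thesis unfolding Kc_def using P_pos fN_pos R_ge
    by (simp add: divide_neg_pos mult_pos_neg)
qed

lemma Mf_row:
  fixes w :: "nat \<Rightarrow> real"
  shows "(\<Sum>j\<le>l. Mf i j * w j) = (if i \<le> l then rr i * y i * w i else 0)
    - (rr i * (c * R * (\<Sum>j\<le>l. rr j * w j) + (\<Sum>j\<le>l. rr j * x j * w j))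
       + rr i * x i * ((\<Sum>j\<le>l. rr j * w j) + kap * (\<Sum>j\<le>l. rr j * x j * w j))) / (R + 1)"
proof -
  have "(\<Sum>j\<le>l. Mf i j * w j) = (\<Sum>j\<le>l. (if i = j then rr i * y i * w i else 0)
     - ((rr i * (c * R)) * (rr j * w j) + rr i * (rr j * x j * w j) + (rr i * x i) * (rr j * w j)
        + (kap * rr i * x i) * (rr j * x j * w j)) / (R + 1))"
    by (intro sum.cong refl) (auto simp: Mf_def algebra_simps)
  also have "\<dots> = (\<Sum>j\<le>l. (if i = j then rr i * y i * w i else 0))
     - ((rr i * (c * R)) * (\<Sum>j\<le>l. rr j * w j) + rr i * (\<Sum>j\<le>l. rr j * x j * w j)
        + (rr i * x i) * (\<Sum>j\<le>l. rr j * w j) + (kap * rr i * x i) * (\<Sum>j\<le>l. rr j * x j * w j)) / (R + 1)"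
    by (simp add: sum_subtractf sum_divide_distrib[symmetric] sum.distrib sum_distrib_left)
  also have "(\<Sum>j\<le>l. (if i = j then rr i * y i * w i else 0)) = (if i \<le> l then rr i * y i * w i else 0)"
    by (simp add: sum.delta)
  finally show ?thesis by (simp add: algebra_simps)
qed

lemma Mf_row_one: "i \<le> l \<Longrightarrow> (\<Sum>j\<le>l. Mf i j) = 0"
proof -
  assume i: "i \<le> l"
  have s1: "(\<Sum>j\<le>l. rr j * 1) = R" using R_sum by simp
  have s2: "(\<Sum>j\<le>l. rr j * x j * 1) = c * R" using sum_rx by simp
  have k: "kap * (c * R) = R + 2" unfolding kap_def using c_pos R_ge by simp
  have "(\<Sum>j\<le>l. Mf i j * 1) = rr i * y i - (rr i * (c * R * R + c * R) + rr i * x i * (R + (R + 2))) / (R + 1)"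
    unfolding Mf_row s1 s2 k using i by simp
  also have "\<dots> = 0" unfolding y_def using R_ge
    by (simp add: field_simps)
  finally show ?thesis by simp
qed

definition "ua = (\<Sum>j\<le>l. rr j * (1 / y j))"
definition "ub = (\<Sum>j\<le>l. rr j * x j * (1 / y j))"
definition "gam = (ua + kap * ub) / (R + 1)"

lemma gam_pos: "gam > 0"
proof -
  have "ua > 0" unfolding ua_def using rr_gt0 y_pos
    by (intro sum_pos) (auto intro!: mult_pos_pos divide_pos_pos)
  moreover have "ub > 0" unfolding ub_def using rr_gt0 y_pos x_pos
    by (intro sum_pos) (auto intro!: mult_pos_pos divide_pos_pos)
  moreover have "kap > 0" unfolding kap_def using R_ge c_pos by simp
  ultimately show ?thesis unfolding gam_def using R_ge by (simp add: add_pos_pos)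
qed

lemma Mf_row_u: "i \<le> l \<Longrightarrow> (\<Sum>j\<le>l. Mf i j * (1 / y j)) = gam * rr i * mu r d i"
proof -
  assume i: "i \<le> l"
  have cRab: "c * R * ua + 2 * ub = R"
  proof -
    have "c * R * ua + 2 * ub = (\<Sum>j\<le>l. rr j * y j * (1 / y j))"
      unfolding ua_def ub_def y_def by (simp add: sum_distrib_left sum.distrib algebra_simps)
    also have "\<dots> = (\<Sum>j\<le>l. rr j)" using y_pos by (intro sum.cong refl) (simp add: less_imp_neq[symmetric])
    finally show ?thesis using R_sum by simp
  qed
  have yi: "rr i * y i * (1 / y i) = rr i" using y_pos[OF i] by simp
  have ne: "c \<noteq> 0" "R \<noteq> 0" "R + 1 \<noteq> 0" using c_pos R_ge by auto
  show ?thesis unfolding Mf_row ua_def[symmetric] ub_def[symmetric] using i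
    by (simp only: if_True yi gam_def kap_def t5[OF ne refl cRab] x_def) simp
qed

lemma Mf_quad:
  fixes w :: "nat \<Rightarrow> real"
  shows "(\<Sum>i\<le>l. w i * (\<Sum>j\<le>l. Mf i j * w j)) = c * R * (\<Sum>i\<le>l. rr i * (w i)^2) + 2 * (\<Sum>i\<le>l. rr i * x i * (w i)^2)
     - ((\<Sum>j\<le>l. rr j * w j) * (c * R * (\<Sum>j\<le>l. rr j * w j) + (\<Sum>j\<le>l. rr j * x j * w j))
       + (\<Sum>j\<le>l. rr j * x j * w j) * ((\<Sum>j\<le>l. rr j * w j) + kap * (\<Sum>j\<le>l. rr j * x j * w j))) / (R + 1)"
proof -
  define S where "S = (\<Sum>j\<le>l. rr j * w j)"
  define T where "T = (\<Sum>j\<le>l. rr j * x j * w j)"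
  have "(\<Sum>i\<le>l. w i * (\<Sum>j\<le>l. Mf i j * w j)) = (\<Sum>i\<le>l. (c * R) * (rr i * (w i)^2) + 2 * (rr i * x i * (w i)^2)
     - ((rr i * w i) * (c * R * S + T) + (rr i * x i * w i) * (S + kap * T)) / (R + 1))"
    unfolding Mf_row S_def[symmetric] T_def[symmetric]
    by (intro sum.cong refl) (simp add: y_def power2_eq_square algebra_simps add_divide_distrib diff_divide_distrib)
  also have "\<dots> = c * R * (\<Sum>i\<le>l. rr i * (w i)^2) + 2 * (\<Sum>i\<le>l. rr i * x i * (w i)^2)
     - (S * (c * R * S + T) + T * (S + kap * T)) / (R + 1)"
    unfolding S_def T_def
    by (simp add: sum_subtractf sum.distrib sum_distrib_left sum_divide_distrib[symmetric] sum_distrib_right)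
  finally show ?thesis unfolding S_def T_def .
qed

lemma Mf_quad_pos:
  fixes w :: "nat \<Rightarrow> real"
  assumes w0: "w 0 = 0" and i0: "i0 \<le> l" "w i0 \<noteq> 0"
  shows "(\<Sum>i\<le>l. w i * (\<Sum>j\<le>l. Mf i j * w j)) > 0"
proof -
  define S where "S = (\<Sum>j\<le>l. rr j * w j)"
  define T where "T = (\<Sum>j\<le>l. rr j * x j * w j)"
  define S2 where "S2 = (\<Sum>i\<le>l. rr i * (w i)^2)"
  define T2 where "T2 = (\<Sum>i\<le>l. rr i * x i * (w i)^2)"
  have ne: "c \<noteq> 0" "R \<noteq> 0" "R + 1 \<noteq> 0" using c_pos R_ge by auto
  have eq: "(\<Sum>i\<le>l. w i * (\<Sum>j\<le>l. Mf i j * w j)) = c * (R * S2 - S^2) + 2 / (c * R) * (c * R * T2 - T^2) + (c * S - T)^2 / (c * (R + 1))"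
    unfolding Mf_quad S_def[symmetric] T_def[symmetric] S2_def[symmetric] T2_def[symmetric] kap_def
    by (rule t4[OF ne refl])
  have L1: "(\<Sum>i\<le>l. \<Sum>j\<le>l. rr i * rr j * (w i - w j)^2) = 2 * (R * S2 - S^2)"
    unfolding lagrange_id S_def S2_def R_sum by simp
  have "(\<Sum>i\<le>l. \<Sum>j\<le>l. rr i * rr j * (w i - w j)^2) > 0"
  proof (rule sum_pos2[of _ i0])
    show "0 < (\<Sum>j\<le>l. rr i0 * rr j * (w i0 - w j)^2)"
    proof (rule sum_pos2[of _ 0])
      show "0 < rr i0 * rr 0 * (w i0 - w 0)^2" using w0 i0 rr_pos[of i0] rr_pos[of 0]
        by (simp add: mult_pos_pos)
    qed (use i0 in \<open>auto intro!: mult_nonneg_nonneg rr_ge0\<close>)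
  qed (use i0 in \<open>auto intro!: sum_nonneg mult_nonneg_nonneg rr_ge0\<close>)
  then have D1: "R * S2 - S^2 > 0" using L1 by simp
  have L2: "(\<Sum>i\<le>l. \<Sum>j\<le>l. (rr i * x i) * (rr j * x j) * (w i - w j)^2) = 2 * (c * R * T2 - T^2)"
    unfolding lagrange_id T_def T2_def sum_rx[symmetric] by (simp add: mult.assoc)
  have "(\<Sum>i\<le>l. \<Sum>j\<le>l. (rr i * x i) * (rr j * x j) * (w i - w j)^2) \<ge> 0"
    by (auto intro!: sum_nonneg mult_nonneg_nonneg rr_ge0 less_imp_le[OF x_pos])
  then have D2: "c * R * T2 - T^2 \<ge> 0" using L2 by simp
  have "c * (R * S2 - S^2) > 0" using D1 c_pos by simp
  moreover have "2 / (c * R) * (c * R * T2 - T^2) \<ge> 0" using D2 c_pos R_ge by simp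
  moreover have "(c * S - T)^2 / (c * (R + 1)) \<ge> 0" using c_pos R_ge by simp
  ultimately show ?thesis unfolding eq by linarith
qed

lemma Q_pos: "Q > 0" unfolding Q_eq using P_pos fN_pos R_ge by simp

lemma Af_sym: "Af i j = Af j i" unfolding Af_eq using Mf_sym by simp

lemma Af_quad: "(\<Sum>i\<le>l. w i * (\<Sum>j\<le>l. Af i j * w j)) = Q * (\<Sum>i\<le>l. w i * (\<Sum>j\<le>l. Mf i j * w j))"
  unfolding Af_eq by (simp add: sum_distrib_left mult.assoc mult.left_commute)

lemma Af_col_sum: "j \<le> l \<Longrightarrow> (\<Sum>i\<le>l. Af i j) = 0"
proof -
  assume j: "j \<le> l"
  have "(\<Sum>i\<le>l. Af i j) = Q * (\<Sum>i\<le>l. Mf j i)"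
    by (simp add: Af_eq sum_distrib_left Mf_sym)
  then show ?thesis using Mf_row_one[OF j] by simp
qed

lemma main: "(\<exists>\<Phi>::real. \<Phi> > 0 \<and> Fring l r d g c = (mu r d 0 - mu r d 1) * \<Phi>)
    \<and> (Fring l r d g c > 0 \<longrightarrow> mu r d 0 > mu r d 1)"
proof -
  define n where "n = l - 1"
  define A where "A = Amat l r d c"
  have Acar: "A \<in> carrier_mat n n" unfolding A_def Amat_def n_def by simp
  have Aent: "\<And>i j. i < n \<Longrightarrow> j < n \<Longrightarrow> A $$ (i,j) = Af (i+2) (j+2)"
    unfolding A_def Amat_def n_def Af_def by simp
  have detA: "det A \<noteq> 0"
  proof
    assume "det A = 0"
    then obtain v where v: "v \<in> carrier_vec n" "v \<noteq> 0\<^sub>v n" "A *\<^sub>v v = 0\<^sub>v n"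
      using det_0_iff_vec_prod_zero[OF Acar] by auto
    obtain k where k: "k < n" "v $ k \<noteq> 0"
    proof -
      have "\<exists>k<n. v $ k \<noteq> 0"
      proof (rule ccontr)
        assume "\<not> (\<exists>k<n. v $ k \<noteq> 0)"
        then have "v = 0\<^sub>v n" using v(1) by (intro eq_vecI) auto
        then show False using v(2) by simp
      qed
      then show ?thesis using that by blast
    qed
    define w where "w i = (if 2 \<le> i \<and> i \<le> l then v $ (i-2) else 0)" for i
    have inner: "(\<Sum>j\<le>l. Af (i+2) j * w j) = 0" if i: "i < n" for i
    proof -
      have "(\<Sum>j\<le>l. Af (i+2) j * w j) = (\<Sum>k<n. A $$ (i,k) * v $ k)"
        unfolding split_sum2[OF l2] n_def[symmetric]
        by (auto simp: w_def n_def Aent[OF i] intro!: sum.cong)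
      also have "\<dots> = (A *\<^sub>v v) $ i" using Acar v(1) i
        by (simp add: mult_mat_vec_def scalar_prod_def lessThan_atLeast0)
      also have "\<dots> = 0" using v(3) i by simp
      finally show ?thesis .
    qed
    have w01: "w 0 = 0" "w 1 = 0" unfolding w_def by auto
    have "(\<Sum>i\<le>l. w i * (\<Sum>j\<le>l. Af i j * w j)) = w 0 * (\<Sum>j\<le>l. Af 0 j * w j) + w 1 * (\<Sum>j\<le>l. Af 1 j * w j)
       + (\<Sum>k<n. w (k+2) * (\<Sum>j\<le>l. Af (k+2) j * w j))"
      unfolding n_def by (rule split_sum2[OF l2])
    also have "\<dots> = 0" using inner w01 by simp
    finally have "(\<Sum>i\<le>l. w i * (\<Sum>j\<le>l. Af i j * w j)) = 0" .
    moreover have "(\<Sum>i\<le>l. w i * (\<Sum>j\<le>l. Af i j * w j)) > 0"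
      unfolding Af_quad using Mf_quad_pos[of w "k+2"] k Q_pos by (simp add: w_def n_def)
    ultimately show False by simp
  qed
  have U: "A \<in> Units (ring_mat TYPE(real) n ())" by (rule det_non_zero_imp_unit[OF Acar detA])
  have "mat_inverse A \<noteq> None"
  proof
    assume "mat_inverse A = None"
    from mat_inverse(1)[OF Acar this, where b = "()"] U show False by simp
  qed
  then obtain B where mi: "mat_inverse A = Some B" by auto
  then have AB: "A * B = 1\<^sub>m n" and Bcar: "B \<in> carrier_mat n n" using mat_inverse(2)[OF Acar] by auto
  have Binv: "Ainv l r d c = B" unfolding Ainv_def A_def[symmetric] mi by simp
  define a where "a k = Af (k+2) 1" for k
  define z where "z s = (\<Sum>j<n. B $$ (s,j) * a j)" for s
  have ABent: "(A * B) $$ (i,j) = (\<Sum>k<n. A $$ (i,k) * B $$ (k,j))" if "i < n" "j < n" for i j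
    using Acar Bcar that by (simp add: scalar_prod_def lessThan_atLeast0)
  have Az: "(\<Sum>k<n. A $$ (i,k) * z k) = a i" if i: "i < n" for i
  proof -
    have "(\<Sum>k<n. A $$ (i,k) * z k) = (\<Sum>k<n. \<Sum>j<n. A $$ (i,k) * B $$ (k,j) * a j)"
      unfolding z_def by (simp add: sum_distrib_left mult.assoc)
    also have "\<dots> = (\<Sum>j<n. \<Sum>k<n. A $$ (i,k) * B $$ (k,j) * a j)" by (rule sum.swap)
    also have "\<dots> = (\<Sum>j<n. (\<Sum>k<n. A $$ (i,k) * B $$ (k,j)) * a j)" by (simp add: sum_distrib_right)
    also have "\<dots> = (\<Sum>j<n. (if i = j then 1 else 0) * a j)"
      using AB i by (intro sum.cong refl) (simp add: ABent[symmetric])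
    also have "\<dots> = (\<Sum>j<n. (if i = j then a j else 0))" by (intro sum.cong refl) simp
    also have "\<dots> = a i" using i by (subst sum.delta') auto
    finally show ?thesis .
  qed
  have F_eq: "Fring l r d g c = bb 1 - (\<Sum>s<n. bb (s+2) * z s)"
  proof -
    have "(\<Sum>j\<in>{2..l}. \<Sum>s\<in>{2..l}. Ainv l r d c $$ (s - 2, j - 2)
          * (alpha0 l r d c * beta1 l r d g c s - alpha1 l r d c s * beta0 l r d g c)
          * (alpha2 l r d c j 1 - alpha1 l r d c 1 * alpha1 l r d c j / alpha0 l r d c))
      = (\<Sum>j<n. \<Sum>s<n. B $$ (s, j) * bb (s+2) * a j)"
      unfolding shift_sum2[OF l2] n_def[symmetric] Binv
      by (simp add: bb_def a_def Af_def mult.commute)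
    also have "\<dots> = (\<Sum>s<n. \<Sum>j<n. B $$ (s, j) * bb (s+2) * a j)" by (rule sum.swap)
    also have "\<dots> = (\<Sum>s<n. bb (s+2) * z s)"
      unfolding z_def by (simp add: sum_distrib_left mult.commute mult.left_commute mult.assoc)
    finally show ?thesis unfolding Fring_def bb_def by simp
  qed
  define w where "w i = (if i = 1 then 1 else if 2 \<le> i \<and> i \<le> l then - z (i-2) else 0)" for i
  define m where "m i = (\<Sum>j\<le>l. Af i j * w j)" for i
  have m2: "m (k+2) = 0" if k: "k < n" for k
  proof -
    have "m (k+2) = Af (k+2) 0 * w 0 + Af (k+2) 1 * w 1 + (\<Sum>j<n. Af (k+2) (j+2) * w (j+2))"
      unfolding m_def n_def by (rule split_sum2[OF l2])
    also have "(\<Sum>j<n. Af (k+2) (j+2) * w (j+2)) = (\<Sum>j<n. - (A $$ (k,j) * z j))"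
    proof (intro sum.cong refl)
      fix j assume "j \<in> {..<n}"
      then have j: "j < n" by simp
      then have "w (j+2) = - z j" unfolding w_def n_def by auto
      then show "Af (k+2) (j+2) * w (j+2) = - (A $$ (k,j) * z j)" using Aent[OF k j] by simp
    qed
    finally have mk: "m (k+2) = Af (k+2) 0 * w 0 + Af (k+2) 1 * w 1 + (\<Sum>j<n. - (A $$ (k,j) * z j))" .
    have "w 0 = 0" "w 1 = 1" unfolding w_def by auto
    then have "m (k+2) = Af (k+2) 1 - (\<Sum>j<n. A $$ (k,j) * z j)" unfolding mk by (simp add: sum_negf)
    then show ?thesis using Az[OF k] a_def by simp
  qed
  have msum: "(\<Sum>i\<le>l. m i) = 0"
  proof -
    have "(\<Sum>i\<le>l. m i) = (\<Sum>j\<le>l. \<Sum>i\<le>l. Af i j * w j)"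
      unfolding m_def by (rule sum.swap)
    also have "\<dots> = (\<Sum>j\<le>l. (\<Sum>i\<le>l. Af i j) * w j)" by (simp add: sum_distrib_right)
    also have "\<dots> = 0" by (simp add: Af_col_sum)
    finally show ?thesis .
  qed
  then have m01: "m 0 = - m 1" unfolding split_sum2[OF l2] n_def[symmetric] using m2 by simp
  have lam: "(\<Sum>i\<le>l. w i * m i) = m 1"
    unfolding split_sum2[OF l2] n_def[symmetric] using m2 by (simp add: w_def)
  have m1pos: "m 1 > 0"
  proof -
    have "(\<Sum>i\<le>l. w i * m i) > 0" unfolding m_def Af_quad
      using Mf_quad_pos[of w 1] l2 Q_pos by (simp add: w_def)
    then show ?thesis using lam by simp
  qed
  have Fw: "Fring l r d g c = (\<Sum>i\<le>l. bb i * w i)"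
    unfolding F_eq split_sum2[OF l2] n_def[symmetric]
    by (simp add: w_def n_def sum_negf[symmetric]) (auto intro!: sum.cong)
  have bbu: "bb i = Kc / (Q * gam) * (\<Sum>j\<le>l. Af i j * (1 / y j))" if "i \<le> l" for i
  proof -
    have "(\<Sum>j\<le>l. Af i j * (1 / y j)) = Q * (gam * rr i * mu r d i)"
      unfolding Af_eq Mf_row_u[OF that, symmetric] by (simp add: sum_distrib_left mult.assoc)
    then show ?thesis unfolding bb_eq using Q_pos gam_pos by simp
  qed
  have "(\<Sum>i\<le>l. bb i * w i) = Kc / (Q * gam) * (\<Sum>i\<le>l. w i * (\<Sum>j\<le>l. Af i j * (1 / y j)))"
    by (simp add: bbu sum_distrib_left mult.commute mult.left_commute)
  also have "(\<Sum>i\<le>l. w i * (\<Sum>j\<le>l. Af i j * (1 / y j))) = (\<Sum>j\<le>l. (1 / y j) * m j)"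
  proof -
    have "(\<Sum>i\<le>l. w i * (\<Sum>j\<le>l. Af i j * (1 / y j))) = (\<Sum>i\<le>l. \<Sum>j\<le>l. (1 / y j) * (Af j i * w i))"
      by (simp add: sum_distrib_left Af_sym[of _ i for i] mult.commute mult.left_commute)
    also have "\<dots> = (\<Sum>j\<le>l. \<Sum>i\<le>l. (1 / y j) * (Af j i * w i))" by (rule sum.swap)
    also have "\<dots> = (\<Sum>j\<le>l. (1 / y j) * m j)" unfolding m_def by (simp add: sum_distrib_left)
    finally show ?thesis .
  qed
  also have "\<dots> = m 1 * (1 / y 1 - 1 / y 0)"
    unfolding split_sum2[OF l2] n_def[symmetric] using m2 m01 by (simp add: algebra_simps)
  finally have FF: "Fring l r d g c = Kc / (Q * gam) * (m 1 * (1 / y 1 - 1 / y 0))" using Fw by simp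
  define \<Phi> where "\<Phi> = - 2 * Kc * m 1 / (Q * gam * y 0 * y 1)"
  have y0: "y 0 > 0" and y1: "y 1 > 0" using y_pos l2 by auto
  have Phipos: "\<Phi> > 0"
  proof -
    have "- 2 * Kc * m 1 > 0" using Kc_neg m1pos by (simp add: mult_neg_pos)
    moreover have "Q * gam * y 0 * y 1 > 0" using Q_pos gam_pos y0 y1 by simp
    ultimately show ?thesis unfolding \<Phi>_def by (rule divide_pos_pos)
  qed
  have FPhi: "Fring l r d g c = (mu r d 0 - mu r d 1) * \<Phi>"
  proof -
    have dy: "y 0 - y 1 = 2 * (mu r d 1 - mu r d 0)" by (simp add: y_def x_def)
    have "1 / y 1 - 1 / y 0 = (y 0 - y 1) / (y 0 * y 1)" using y0 y1 by (simp add: field_simps)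
    then have dd: "1 / y 1 - 1 / y 0 = 2 * (mu r d 1 - mu r d 0) / (y 0 * y 1)" unfolding dy .
    show ?thesis unfolding FF \<Phi>_def dd using Q_pos gam_pos y0 y1
      by (simp add: field_simps)
  qed
  show ?thesis
  proof
    show "\<exists>\<Phi>::real. \<Phi> > 0 \<and> Fring l r d g c = (mu r d 0 - mu r d 1) * \<Phi>" using Phipos FPhi by blast
    show "Fring l r d g c > 0 \<longrightarrow> mu r d 0 > mu r d 1"
      using FPhi Phipos by (simp add: zero_less_mult_iff)
  qed
qed

end

theorem proposition3p19:
  fixes l :: nat and r d :: "nat \<Rightarrow> int" and g :: int and c :: real
  assumes "l \<ge> 2"
    and "\<And>k. k \<le> l \<Longrightarrow> r k \<ge> 1"
    and "(\<Sum>k\<le>l. d k) = 0"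
    and "g \<ge> 1"
    and "\<And>k. k \<le> l \<Longrightarrow> mu r d k < c"
  shows "(\<exists>\<Phi>::real. \<Phi> > 0 \<and> Fring l r d g c = (mu r d 0 - mu r d 1) * \<Phi>)
    \<and> (Fring l r d g c > 0 \<longrightarrow> mu r d 0 > mu r d 1)"
proof -
  interpret P319 l r d g c using assms by unfold_locales
  show ?thesis by (rule main)
qed

end
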